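(* Let $n$ be a positive integer. (1) The graph obtained from two disjoint triangles $K_3$ by adding a perfect matching between them (the $i$-th vertex of one triangle joined to the $i$-th vertex of the other) is not a vertex-minor of $C_n$. (2) $C_7$ is not a vertex-minor of the graph obtained from two disjoint copies of $K_n$ by adding a perfect matching between them (the $i$-th vertex of one copy joined to the $i$-th vertex of the other).
   Context: All graphs are simple. A graph $H$ is a vertex-minor of $G$ if $H$ is an induced subgraph of a graph obtained from $G$ by a sequence of local complementations (local complementation at $v$ replaces the subgraph induced on the neighborhood of $v$ by its complement). $C_n$ is the cycle on $n$ vertices. *)

theory Defs
  imports Main
begin

definition simple_graph :: "'a set \<Rightarrow> ('a \<Rightarrow> 'a \<Rightarrow> bool) \<Rightarrow> bool" where
  "simple_graph V E \<longleftrightarrow> finite V \<and> (\<forall>x y. E x y \<longrightarrow> x \<in> V \<and> y \<in> V)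
     \<and> (\<forall>x y. E x y \<longrightarrow> E y x) \<and> (\<forall>x. \<not> E x x)"

definition local_comp :: "('a \<Rightarrow> 'a \<Rightarrow> bool) \<Rightarrow> 'a \<Rightarrow> ('a \<Rightarrow> 'a \<Rightarrow> bool)" where
  "local_comp E v = (\<lambda>x y. if E v x \<and> E v y \<and> x \<noteq> y then \<not> E x y else E x y)"

inductive lc_reach :: "('a \<Rightarrow> 'a \<Rightarrow> bool) \<Rightarrow> ('a \<Rightarrow> 'a \<Rightarrow> bool) \<Rightarrow> bool"
  for E where
  lc_refl: "lc_reach E E"
| lc_step: "lc_reach E E' \<Longrightarrow> lc_reach E (local_comp E' v)"

definition induced :: "('a \<Rightarrow> 'a \<Rightarrow> bool) \<Rightarrow> 'a set \<Rightarrow> ('a \<Rightarrow> 'a \<Rightarrow> bool)" where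
  "induced E W = (\<lambda>x y. E x y \<and> x \<in> W \<and> y \<in> W)"

definition graph_iso :: "'a set \<Rightarrow> ('a \<Rightarrow> 'a \<Rightarrow> bool) \<Rightarrow> 'b set \<Rightarrow> ('b \<Rightarrow> 'b \<Rightarrow> bool) \<Rightarrow> bool" where
  "graph_iso V1 E1 V2 E2 \<longleftrightarrow>
     (\<exists>f. bij_betw f V1 V2 \<and> (\<forall>x\<in>V1. \<forall>y\<in>V1. E1 x y \<longleftrightarrow> E2 (f x) (f y)))"

definition vertex_minor :: "'a set \<Rightarrow> ('a \<Rightarrow> 'a \<Rightarrow> bool) \<Rightarrow> 'b set \<Rightarrow> ('b \<Rightarrow> 'b \<Rightarrow> bool) \<Rightarrow> bool" where
  "vertex_minor VH EH VG EG \<longleftrightarrow>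
     (\<exists>E'. lc_reach EG E' \<and> (\<exists>W \<subseteq> VG. graph_iso VH EH W (induced E' W)))"

definition cycle_V :: "nat \<Rightarrow> nat set" where
  "cycle_V n = {0..<n}"

definition cycle_E :: "nat \<Rightarrow> nat \<Rightarrow> nat \<Rightarrow> bool" where
  "cycle_E n x y \<longleftrightarrow> x < n \<and> y < n \<and> x \<noteq> y \<and> (y = (x + 1) mod n \<or> x = (y + 1) mod n)"

definition twoK_V :: "nat \<Rightarrow> (nat \<times> bool) set" where
  "twoK_V n = {0..<n} \<times> UNIV"

definition twoK_E :: "nat \<Rightarrow> nat \<times> bool \<Rightarrow> nat \<times> bool \<Rightarrow> bool" where
  "twoK_E n u v \<longleftrightarrow> u \<in> twoK_V n \<and> v \<in> twoK_V n \<and>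
     ((snd u = snd v \<and> fst u \<noteq> fst v) \<or> (snd u \<noteq> snd v \<and> fst u = fst v))"

end

theory Submission
  imports Defs
begin


definition rk2 :: "('a \<Rightarrow> 'a \<Rightarrow> bool) \<Rightarrow> 'a set \<Rightarrow> 'a set \<Rightarrow> bool" where
 "rk2 E X Y \<longleftrightarrow> (\<exists>u1 u2. \<forall>x\<in>X. \<exists>a b. \<forall>y\<in>Y. E x y = ((a \<and> u1 y) \<noteq> (b \<and> u2 y)))"

lemma rk2_transfer:
  assumes "rk2 E X Y" "f ` A \<subseteq> X" "f ` B \<subseteq> Y" "\<forall>a\<in>A. \<forall>b\<in>B. E2 a b = E (f a) (f b)"
  shows "rk2 E2 A B"
proof -
  obtain u1 u2 where u: "\<forall>x\<in>X. \<exists>a b. \<forall>y\<in>Y. E x y = ((a \<and> u1 y) \<noteq> (b \<and> u2 y))"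
    using assms(1) unfolding rk2_def by blast
  show ?thesis unfolding rk2_def
  proof (rule exI[of _ "u1 \<circ> f"], rule exI[of _ "u2 \<circ> f"], rule ballI)
    fix x assume x: "x \<in> A"
    have fx: "f x \<in> X" using assms(2) x by blast
    obtain a b where ab: "\<forall>y\<in>Y. E (f x) y = ((a \<and> u1 y) \<noteq> (b \<and> u2 y))"
      using u fx by blast
    show "\<exists>a b. \<forall>y\<in>B. E2 x y = ((a \<and> (u1 \<circ> f) y) \<noteq> (b \<and> (u2 \<circ> f) y))"
    proof (rule exI[of _ a], rule exI[of _ b], rule ballI)
      fix y assume y: "y \<in> B"
      have "f y \<in> Y" using assms(3) y by blast
      then show "E2 x y = ((a \<and> (u1 \<circ> f) y) \<noteq> (b \<and> (u2 \<circ> f) y))"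
        using ab assms(4) x y by simp
    qed
  qed
qed

definition inv3 :: "('a \<Rightarrow> 'a \<Rightarrow> bool) \<Rightarrow> 'a set \<Rightarrow> bool" where
  "inv3 E V \<longleftrightarrow> (\<forall>x y. E x y \<longrightarrow> E y x) \<and> (\<forall>x. \<not> E x x) \<and> (\<forall>x y. E x y \<longrightarrow> x \<in> V)"

lemma inv3_lc: "inv3 E V \<Longrightarrow> inv3 (local_comp E v) V"
  unfolding inv3_def local_comp_def by (smt (verit))

lemma rk2_lc:
  assumes "inv3 E (X \<union> Y)" "X \<inter> Y = {}" "rk2 E X Y"
  shows "rk2 (local_comp E v) X Y"
proof -
  obtain u1 u2 where u: "\<forall>x\<in>X. \<exists>a b. \<forall>y\<in>Y. E x y = ((a \<and> u1 y) \<noteq> (b \<and> u2 y))"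
    using assms(3) unfolding rk2_def by blast
  have sym: "\<And>x y. E x y = E y x" and irr: "\<And>x. \<not> E x x" and dom: "\<And>x y. E x y \<Longrightarrow> x \<in> X \<union> Y"
    using assms(1) unfolding inv3_def by blast+
  have new: "\<And>x y. x \<in> X \<Longrightarrow> y \<in> Y \<Longrightarrow> local_comp E v x y = (E x y \<noteq> (E v x \<and> E v y))"
    using assms(2) unfolding local_comp_def by auto
  consider "v \<in> X" | "v \<in> Y" | "v \<notin> X \<union> Y" by blast
  then show ?thesis
  proof cases
    case 1
    then obtain a1 b1 where v: "\<forall>y\<in>Y. E v y = ((a1 \<and> u1 y) \<noteq> (b1 \<and> u2 y))" using u by blast
    show ?thesis unfolding rk2_def
    proof (rule exI[of _ u1], rule exI[of _ u2], rule ballI)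
      fix x assume x: "x \<in> X"
      then obtain a b where ab: "\<forall>y\<in>Y. E x y = ((a \<and> u1 y) \<noteq> (b \<and> u2 y))" using u by blast
      show "\<exists>a b. \<forall>y\<in>Y. local_comp E v x y = ((a \<and> u1 y) \<noteq> (b \<and> u2 y))"
        apply (rule exI[of _ "a \<noteq> (E v x \<and> a1)"], rule exI[of _ "b \<noteq> (E v x \<and> b1)"])
      proof
        fix y assume y: "y \<in> Y"
        have h1: "E x y = ((a \<and> u1 y) \<noteq> (b \<and> u2 y))" using ab y by blast
        have h2: "E v y = ((a1 \<and> u1 y) \<noteq> (b1 \<and> u2 y))" using v y by blast
        have h3: "local_comp E v x y = (E x y \<noteq> (E v x \<and> E v y))" using new x y by blast
        show "local_comp E v x y = (((a \<noteq> (E v x \<and> a1)) \<and> u1 y) \<noteq> ((b \<noteq> (E v x \<and> b1)) \<and> u2 y))"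
          using h1 h2 h3 by argo
      qed
    qed
  next
    case 2
    show ?thesis unfolding rk2_def
    proof (rule exI[of _ "\<lambda>y. u1 y \<noteq> (u1 v \<and> E v y)"], rule exI[of _ "\<lambda>y. u2 y \<noteq> (u2 v \<and> E v y)"], rule ballI)
      fix x assume x: "x \<in> X"
      then obtain a b where ab: "\<forall>y\<in>Y. E x y = ((a \<and> u1 y) \<noteq> (b \<and> u2 y))" using u by blast
      have evx: "E v x = ((a \<and> u1 v) \<noteq> (b \<and> u2 v))" using ab 2 sym by auto
      show "\<exists>a b. \<forall>y\<in>Y. local_comp E v x y = ((a \<and> (u1 y \<noteq> (u1 v \<and> E v y))) \<noteq> (b \<and> (u2 y \<noteq> (u2 v \<and> E v y))))"
        apply (rule exI[of _ a], rule exI[of _ b])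
      proof
        fix y assume y: "y \<in> Y"
        have h1: "E x y = ((a \<and> u1 y) \<noteq> (b \<and> u2 y))" using ab y by blast
        have h3: "local_comp E v x y = (E x y \<noteq> (E v x \<and> E v y))" using new x y by blast
        show "local_comp E v x y = ((a \<and> (u1 y \<noteq> (u1 v \<and> E v y))) \<noteq> (b \<and> (u2 y \<noteq> (u2 v \<and> E v y))))"
          using h1 evx h3 by argo
      qed
    qed
  next
    case 3
    then have nv: "\<And>x. \<not> E v x" using dom by blast
    have "local_comp E v = E" unfolding local_comp_def using nv by (intro ext) simp
    then show ?thesis using assms(3) by simp
  qed
qed

lemma lc_reach_rk2:
  assumes "lc_reach E E'" "inv3 E (X \<union> Y)" "X \<inter> Y = {}" "rk2 E X Y"
  shows "rk2 E' X Y \<and> inv3 E' (X \<union> Y)"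
  using assms(1)
proof induction
  case lc_refl
  then show ?case using assms by simp
next
  case (lc_step E' v)
  then show ?case using rk2_lc[OF _ assms(3), of E' v] inv3_lc[of E' "X \<union> Y" v] by simp
qed

lemma rk2_three:
  assumes "rk2 E X Y" "p \<in> X" "q \<in> X" "r \<in> X"
  shows "(\<forall>y\<in>Y. \<not> E p y) \<or> (\<forall>y\<in>Y. \<not> E q y) \<or> (\<forall>y\<in>Y. \<not> E r y) \<or> (\<forall>y\<in>Y. E p y = E q y)
    \<or> (\<forall>y\<in>Y. E p y = E r y) \<or> (\<forall>y\<in>Y. E q y = E r y) \<or> (\<forall>y\<in>Y. E r y = (E p y \<noteq> E q y))"
proof -
  obtain u1 u2 where u: "\<forall>x\<in>X. \<exists>a b. \<forall>y\<in>Y. E x y = ((a \<and> u1 y) \<noteq> (b \<and> u2 y))"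
    using assms(1) unfolding rk2_def by blast
  obtain ap bp where p: "\<forall>y\<in>Y. E p y = ((ap \<and> u1 y) \<noteq> (bp \<and> u2 y))" using u assms by blast
  obtain aq bq where q: "\<forall>y\<in>Y. E q y = ((aq \<and> u1 y) \<noteq> (bq \<and> u2 y))" using u assms by blast
  obtain ar br where r: "\<forall>y\<in>Y. E r y = ((ar \<and> u1 y) \<noteq> (br \<and> u2 y))" using u assms by blast
  show ?thesis using p q r
    by (cases ap; cases bp; cases aq; cases bq; cases ar; cases br) auto
qed



lemma cycle_cut:
  assumes "x < t" "t \<le> y" "y < n"
  shows "cycle_E n x y \<longleftrightarrow> (x + 1 = t \<and> y = t) \<or> (x = 0 \<and> y = n - 1)"
proof -
  have x1: "(x + 1) mod n = x + 1" using assms by simp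
  have y1: "y + 1 < n \<Longrightarrow> (y + 1) mod n = y + 1" by simp
  have y2: "y + 1 = n \<Longrightarrow> (y + 1) mod n = 0" by simp
  show ?thesis unfolding cycle_E_def using assms x1 y1 y2
    by (cases "y + 1 < n") auto
qed

lemma rk2_cycle: "rk2 (cycle_E n) {0..<t} {t..<n}"
  unfolding rk2_def
proof (rule exI[of _ "\<lambda>y. y = t"], rule exI[of _ "\<lambda>y. y = n - 1"], rule ballI)
  fix x assume x: "x \<in> {0..<t}"
  show "\<exists>a b. \<forall>y\<in>{t..<n}. cycle_E n x y = ((a \<and> y = t) \<noteq> (b \<and> y = n - 1))"
  proof (rule exI[of _ "x + 1 = t"], rule exI[of _ "x = 0 \<and> (x + 1 \<noteq> t \<or> t \<noteq> n - 1)"], rule ballI)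
    fix y assume y: "y \<in> {t..<n}"
    show "cycle_E n x y = ((x + 1 = t \<and> y = t) \<noteq> ((x = 0 \<and> (x + 1 \<noteq> t \<or> t \<noteq> n - 1)) \<and> y = n - 1))"
      using cycle_cut[of x t y n] x y by auto
  qed
qed

lemma inv3_cycle: "inv3 (cycle_E n) ({0..<t} \<union> {t..<n})"
  unfolding inv3_def cycle_E_def by auto

lemma threshold:
  fixes W :: "nat set"
  assumes "finite W" "k \<le> card W"
  shows "\<exists>t. card {w\<in>W. w < t} = k"
  using assms(2)
proof (induction k)
  case 0
  then show ?case by (intro exI[of _ 0]) simp
next
  case (Suc k)
  then obtain t where t: "card {w\<in>W. w < t} = k" by auto
  have "{w\<in>W. w < t} \<noteq> W"
  proof
    assume "{w\<in>W. w < t} = W"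
    then have "card W = k" using t by simp
    then show False using Suc.prems by simp
  qed
  then have ne: "{w\<in>W. t \<le> w} \<noteq> {}" by auto
  define m where "m = Min {w\<in>W. t \<le> w}"
  have fin: "finite {w\<in>W. t \<le> w}" using assms(1) by simp
  have m: "m \<in> W" "t \<le> m" using Min_in[OF fin ne] unfolding m_def by auto
  have mmin: "\<And>w. w \<in> W \<Longrightarrow> t \<le> w \<Longrightarrow> m \<le> w" unfolding m_def using fin by auto
  have eq: "{w\<in>W. w < m + 1} = insert m {w\<in>W. w < t}"
    using m mmin by force
  have "m \<notin> {w\<in>W. w < t}" using m by auto
  then have "card {w\<in>W. w < m + 1} = Suc k" unfolding eq using t assms(1) by simp
  then show ?case by blast
qed

lemma V6: "twoK_V 3 = {(0,False),(1,False),(2,False),(0,True),(1,True),(2,True)}"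
  unfolding twoK_V_def by (auto simp: less_Suc_eq numeral_eq_Suc)

lemma E6: "twoK_E 3 (a,s) (b,s') = (a < 3 \<and> b < 3 \<and> ((s = s' \<and> a \<noteq> b) \<or> (s \<noteq> s' \<and> a = b)))"
  unfolding twoK_E_def twoK_V_def by auto

lemma prism_table:
  "\<forall>p\<in>twoK_V 3. \<forall>q\<in>twoK_V 3. \<forall>r\<in>twoK_V 3. p \<noteq> q \<and> p \<noteq> r \<and> q \<noteq> r \<longrightarrow>
    \<not> ((\<forall>y\<in>twoK_V 3. y \<noteq> p \<longrightarrow> y \<noteq> q \<longrightarrow> y \<noteq> r \<longrightarrow> \<not> twoK_E 3 p y) \<or> (\<forall>y\<in>twoK_V 3. y \<noteq> p \<longrightarrow> y \<noteq> q \<longrightarrow> y \<noteq> r \<longrightarrow> \<not> twoK_E 3 q y) \<or> (\<forall>y\<in>twoK_V 3. y \<noteq> p \<longrightarrow> y \<noteq> q \<longrightarrow> y \<noteq> r \<longrightarrow> \<not> twoK_E 3 r y)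
     \<or> (\<forall>y\<in>twoK_V 3. y \<noteq> p \<longrightarrow> y \<noteq> q \<longrightarrow> y \<noteq> r \<longrightarrow> twoK_E 3 p y = twoK_E 3 q y)
     \<or> (\<forall>y\<in>twoK_V 3. y \<noteq> p \<longrightarrow> y \<noteq> q \<longrightarrow> y \<noteq> r \<longrightarrow> twoK_E 3 p y = twoK_E 3 r y) \<or> (\<forall>y\<in>twoK_V 3. y \<noteq> p \<longrightarrow> y \<noteq> q \<longrightarrow> y \<noteq> r \<longrightarrow> twoK_E 3 q y = twoK_E 3 r y)
     \<or> (\<forall>y\<in>twoK_V 3. y \<noteq> p \<longrightarrow> y \<noteq> q \<longrightarrow> y \<noteq> r \<longrightarrow> twoK_E 3 r y = (twoK_E 3 p y \<noteq> twoK_E 3 q y)))"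
  unfolding V6 by (simp add: E6)

lemma prism_no_rk2:
  assumes "A \<subseteq> twoK_V 3" "card A = 3"
  shows "\<not> rk2 (twoK_E 3) A (twoK_V 3 - A)"
proof
  assume rk: "rk2 (twoK_E 3) A (twoK_V 3 - A)"
  obtain p q r where A: "A = {p,q,r}" "p \<noteq> q" "q \<noteq> r" "p \<noteq> r"
    using assms(2) card_3_iff by metis
  have pqr: "p \<in> twoK_V 3" "q \<in> twoK_V 3" "r \<in> twoK_V 3" using assms(1) A by auto
  have D: "(\<forall>y\<in>twoK_V 3 - A. \<not> twoK_E 3 p y) \<or> (\<forall>y\<in>twoK_V 3 - A. \<not> twoK_E 3 q y) \<or> (\<forall>y\<in>twoK_V 3 - A. \<not> twoK_E 3 r y) \<or> (\<forall>y\<in>twoK_V 3 - A. twoK_E 3 p y = twoK_E 3 q y)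
    \<or> (\<forall>y\<in>twoK_V 3 - A. twoK_E 3 p y = twoK_E 3 r y) \<or> (\<forall>y\<in>twoK_V 3 - A. twoK_E 3 q y = twoK_E 3 r y) \<or> (\<forall>y\<in>twoK_V 3 - A. twoK_E 3 r y = (twoK_E 3 p y \<noteq> twoK_E 3 q y))"
    using rk2_three[OF rk, of p q r] A by simp
  have "\<not> ((\<forall>y\<in>twoK_V 3. y \<noteq> p \<longrightarrow> y \<noteq> q \<longrightarrow> y \<noteq> r \<longrightarrow> \<not> twoK_E 3 p y) \<or> (\<forall>y\<in>twoK_V 3. y \<noteq> p \<longrightarrow> y \<noteq> q \<longrightarrow> y \<noteq> r \<longrightarrow> \<not> twoK_E 3 q y) \<or> (\<forall>y\<in>twoK_V 3. y \<noteq> p \<longrightarrow> y \<noteq> q \<longrightarrow> y \<noteq> r \<longrightarrow> \<not> twoK_E 3 r y)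
     \<or> (\<forall>y\<in>twoK_V 3. y \<noteq> p \<longrightarrow> y \<noteq> q \<longrightarrow> y \<noteq> r \<longrightarrow> twoK_E 3 p y = twoK_E 3 q y)
     \<or> (\<forall>y\<in>twoK_V 3. y \<noteq> p \<longrightarrow> y \<noteq> q \<longrightarrow> y \<noteq> r \<longrightarrow> twoK_E 3 p y = twoK_E 3 r y) \<or> (\<forall>y\<in>twoK_V 3. y \<noteq> p \<longrightarrow> y \<noteq> q \<longrightarrow> y \<noteq> r \<longrightarrow> twoK_E 3 q y = twoK_E 3 r y)
     \<or> (\<forall>y\<in>twoK_V 3. y \<noteq> p \<longrightarrow> y \<noteq> q \<longrightarrow> y \<noteq> r \<longrightarrow> twoK_E 3 r y = (twoK_E 3 p y \<noteq> twoK_E 3 q y)))"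
    using prism_table pqr A by blast
  moreover have bq: "\<And>P. (\<forall>y\<in>twoK_V 3 - A. P y) = (\<forall>y\<in>twoK_V 3. y \<noteq> p \<longrightarrow> y \<noteq> q \<longrightarrow> y \<noteq> r \<longrightarrow> P y)"
    using A(1) by auto
  ultimately show False using D unfolding bq by blast
qed

lemma part1:
  assumes "0 < n"
  shows "\<not> vertex_minor (twoK_V 3) (twoK_E 3) (cycle_V n) (cycle_E n)"
proof
  assume "vertex_minor (twoK_V 3) (twoK_E 3) (cycle_V n) (cycle_E n)"
  then obtain E' W f where E': "lc_reach (cycle_E n) E'" and W: "W \<subseteq> {0..<n}"
    and f: "bij_betw f (twoK_V 3) W"
    and iso: "\<forall>x\<in>twoK_V 3. \<forall>y\<in>twoK_V 3. twoK_E 3 x y \<longleftrightarrow> induced E' W (f x) (f y)"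
    unfolding vertex_minor_def graph_iso_def cycle_V_def by blast
  have c6: "card (twoK_V 3) = 6" unfolding V6 by simp
  have cW: "card W = 6" using bij_betw_same_card[OF f] c6 by simp
  have finW: "finite W" using W finite_subset by blast
  obtain t where t: "card {w\<in>W. w < t} = 3" using threshold[OF finW, of 3] cW by auto
  have rk: "rk2 E' {0..<t} {t..<n}"
    using lc_reach_rk2[OF E' inv3_cycle _ rk2_cycle] by auto
  define A where "A = {a\<in>twoK_V 3. f a < t}"
  have fA: "f ` A = {w\<in>W. w < t}" unfolding A_def using f unfolding bij_betw_def by auto
  have injA: "inj_on f A" using f unfolding bij_betw_def A_def by (auto intro: inj_on_subset)
  have cA: "card A = 3" using card_image[OF injA] fA t by simp
  have AV: "A \<subseteq> twoK_V 3" unfolding A_def by auto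
  have "rk2 (twoK_E 3) A (twoK_V 3 - A)"
  proof (rule rk2_transfer[OF rk, of f])
    show "f ` A \<subseteq> {0..<t}" unfolding A_def by auto
    show "f ` (twoK_V 3 - A) \<subseteq> {t..<n}" unfolding A_def using f W unfolding bij_betw_def by force
    show "\<forall>a\<in>A. \<forall>b\<in>twoK_V 3 - A. twoK_E 3 a b = E' (f a) (f b)"
      using iso AV f unfolding induced_def bij_betw_def by blast
  qed
  then show False using prism_no_rk2[OF AV cA] by simp
qed


lemma all7: "(\<forall>a<(7::nat). P a) \<longleftrightarrow> P 0 \<and> P 1 \<and> P 2 \<and> P 3 \<and> P 4 \<and> P 5 \<and> P 6"
proof -
  have "{..<(7::nat)} = {0,1,2,3,4,5,6}" by auto
  then show ?thesis by (metis (no_types) lessThan_iff insert_iff empty_iff)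
qed
lemma nrk_0: "\<not> rk2 (cycle_E 7) {1,2,4} ({0..<7} - {1,2,4})"
proof
  assume rk: "rk2 (cycle_E 7) {1,2,4} ({0..<7} - {1,2,4})"
  have Yeq: "{0..<7::nat} - {1,2,4} = {0,3,5,6}" by auto
  show False using rk2_three[OF rk, of 1 2 4] unfolding Yeq by (simp add: cycle_E_def)
qed

lemma nrk_1: "\<not> rk2 (cycle_E 7) {1,3,4} ({0..<7} - {1,3,4})"
proof
  assume rk: "rk2 (cycle_E 7) {1,3,4} ({0..<7} - {1,3,4})"
  have Yeq: "{0..<7::nat} - {1,3,4} = {0,2,5,6}" by auto
  show False using rk2_three[OF rk, of 1 3 4] unfolding Yeq by (simp add: cycle_E_def)
qed

lemma nrk_2: "\<not> rk2 (cycle_E 7) {1,2,5} ({0..<7} - {1,2,5})"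
proof
  assume rk: "rk2 (cycle_E 7) {1,2,5} ({0..<7} - {1,2,5})"
  have Yeq: "{0..<7::nat} - {1,2,5} = {0,3,4,6}" by auto
  show False using rk2_three[OF rk, of 1 2 5] unfolding Yeq by (simp add: cycle_E_def)
qed

lemma nrk_3: "\<not> rk2 (cycle_E 7) {1,3,5} ({0..<7} - {1,3,5})"
proof
  assume rk: "rk2 (cycle_E 7) {1,3,5} ({0..<7} - {1,3,5})"
  have Yeq: "{0..<7::nat} - {1,3,5} = {0,2,4,6}" by auto
  show False using rk2_three[OF rk, of 1 3 5] unfolding Yeq by (simp add: cycle_E_def)
qed

lemma nrk_4: "\<not> rk2 (cycle_E 7) {2,3,5} ({0..<7} - {2,3,5})"
proof
  assume rk: "rk2 (cycle_E 7) {2,3,5} ({0..<7} - {2,3,5})"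
  have Yeq: "{0..<7::nat} - {2,3,5} = {0,1,4,6}" by auto
  show False using rk2_three[OF rk, of 2 3 5] unfolding Yeq by (simp add: cycle_E_def)
qed

lemma nrk_5: "\<not> rk2 (cycle_E 7) {1,2,3,5} ({0..<7} - {1,2,3,5})"
proof
  assume rk: "rk2 (cycle_E 7) {1,2,3,5} ({0..<7} - {1,2,3,5})"
  have Yeq: "{0..<7::nat} - {1,2,3,5} = {0,4,6}" by auto
  show False using rk2_three[OF rk, of 1 3 5] unfolding Yeq by (simp add: cycle_E_def)
qed

lemma nrk_6: "\<not> rk2 (cycle_E 7) {1,4,5} ({0..<7} - {1,4,5})"
proof
  assume rk: "rk2 (cycle_E 7) {1,4,5} ({0..<7} - {1,4,5})"
  have Yeq: "{0..<7::nat} - {1,4,5} = {0,2,3,6}" by auto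
  show False using rk2_three[OF rk, of 1 4 5] unfolding Yeq by (simp add: cycle_E_def)
qed

lemma nrk_7: "\<not> rk2 (cycle_E 7) {2,4,5} ({0..<7} - {2,4,5})"
proof
  assume rk: "rk2 (cycle_E 7) {2,4,5} ({0..<7} - {2,4,5})"
  have Yeq: "{0..<7::nat} - {2,4,5} = {0,1,3,6}" by auto
  show False using rk2_three[OF rk, of 2 4 5] unfolding Yeq by (simp add: cycle_E_def)
qed

lemma nrk_8: "\<not> rk2 (cycle_E 7) {1,2,4,5} ({0..<7} - {1,2,4,5})"
proof
  assume rk: "rk2 (cycle_E 7) {1,2,4,5} ({0..<7} - {1,2,4,5})"
  have Yeq: "{0..<7::nat} - {1,2,4,5} = {0,3,6}" by auto
  show False using rk2_three[OF rk, of 1 2 5] unfolding Yeq by (simp add: cycle_E_def)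
qed

lemma nrk_9: "\<not> rk2 (cycle_E 7) {1,3,4,5} ({0..<7} - {1,3,4,5})"
proof
  assume rk: "rk2 (cycle_E 7) {1,3,4,5} ({0..<7} - {1,3,4,5})"
  have Yeq: "{0..<7::nat} - {1,3,4,5} = {0,2,6}" by auto
  show False using rk2_three[OF rk, of 1 3 5] unfolding Yeq by (simp add: cycle_E_def)
qed

lemma nrk_10: "\<not> rk2 (cycle_E 7) {1,2,6} ({0..<7} - {1,2,6})"
proof
  assume rk: "rk2 (cycle_E 7) {1,2,6} ({0..<7} - {1,2,6})"
  have Yeq: "{0..<7::nat} - {1,2,6} = {0,3,4,5}" by auto
  show False using rk2_three[OF rk, of 1 2 6] unfolding Yeq by (simp add: cycle_E_def)
qed

lemma nrk_11: "\<not> rk2 (cycle_E 7) {1,3,6} ({0..<7} - {1,3,6})"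
proof
  assume rk: "rk2 (cycle_E 7) {1,3,6} ({0..<7} - {1,3,6})"
  have Yeq: "{0..<7::nat} - {1,3,6} = {0,2,4,5}" by auto
  show False using rk2_three[OF rk, of 1 3 6] unfolding Yeq by (simp add: cycle_E_def)
qed

lemma nrk_12: "\<not> rk2 (cycle_E 7) {2,3,6} ({0..<7} - {2,3,6})"
proof
  assume rk: "rk2 (cycle_E 7) {2,3,6} ({0..<7} - {2,3,6})"
  have Yeq: "{0..<7::nat} - {2,3,6} = {0,1,4,5}" by auto
  show False using rk2_three[OF rk, of 2 3 6] unfolding Yeq by (simp add: cycle_E_def)
qed

lemma nrk_13: "\<not> rk2 (cycle_E 7) {1,2,3,6} ({0..<7} - {1,2,3,6})"
proof
  assume rk: "rk2 (cycle_E 7) {1,2,3,6} ({0..<7} - {1,2,3,6})"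
  have Yeq: "{0..<7::nat} - {1,2,3,6} = {0,4,5}" by auto
  show False using rk2_three[OF rk, of 1 3 6] unfolding Yeq by (simp add: cycle_E_def)
qed

lemma nrk_14: "\<not> rk2 (cycle_E 7) {1,4,6} ({0..<7} - {1,4,6})"
proof
  assume rk: "rk2 (cycle_E 7) {1,4,6} ({0..<7} - {1,4,6})"
  have Yeq: "{0..<7::nat} - {1,4,6} = {0,2,3,5}" by auto
  show False using rk2_three[OF rk, of 1 4 6] unfolding Yeq by (simp add: cycle_E_def)
qed

lemma nrk_15: "\<not> rk2 (cycle_E 7) {2,4,6} ({0..<7} - {2,4,6})"
proof
  assume rk: "rk2 (cycle_E 7) {2,4,6} ({0..<7} - {2,4,6})"
  have Yeq: "{0..<7::nat} - {2,4,6} = {0,1,3,5}" by auto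
  show False using rk2_three[OF rk, of 2 4 6] unfolding Yeq by (simp add: cycle_E_def)
qed

lemma nrk_16: "\<not> rk2 (cycle_E 7) {1,2,4,6} ({0..<7} - {1,2,4,6})"
proof
  assume rk: "rk2 (cycle_E 7) {1,2,4,6} ({0..<7} - {1,2,4,6})"
  have Yeq: "{0..<7::nat} - {1,2,4,6} = {0,3,5}" by auto
  show False using rk2_three[OF rk, of 1 2 4] unfolding Yeq by (simp add: cycle_E_def)
qed

lemma nrk_17: "\<not> rk2 (cycle_E 7) {3,4,6} ({0..<7} - {3,4,6})"
proof
  assume rk: "rk2 (cycle_E 7) {3,4,6} ({0..<7} - {3,4,6})"
  have Yeq: "{0..<7::nat} - {3,4,6} = {0,1,2,5}" by auto
  show False using rk2_three[OF rk, of 3 4 6] unfolding Yeq by (simp add: cycle_E_def)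
qed

lemma nrk_18: "\<not> rk2 (cycle_E 7) {1,3,4,6} ({0..<7} - {1,3,4,6})"
proof
  assume rk: "rk2 (cycle_E 7) {1,3,4,6} ({0..<7} - {1,3,4,6})"
  have Yeq: "{0..<7::nat} - {1,3,4,6} = {0,2,5}" by auto
  show False using rk2_three[OF rk, of 1 3 4] unfolding Yeq by (simp add: cycle_E_def)
qed

lemma nrk_19: "\<not> rk2 (cycle_E 7) {2,3,4,6} ({0..<7} - {2,3,4,6})"
proof
  assume rk: "rk2 (cycle_E 7) {2,3,4,6} ({0..<7} - {2,3,4,6})"
  have Yeq: "{0..<7::nat} - {2,3,4,6} = {0,1,5}" by auto
  show False using rk2_three[OF rk, of 2 4 6] unfolding Yeq by (simp add: cycle_E_def)
qed

lemma nrk_20: "\<not> rk2 (cycle_E 7) {1,5,6} ({0..<7} - {1,5,6})"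
proof
  assume rk: "rk2 (cycle_E 7) {1,5,6} ({0..<7} - {1,5,6})"
  have Yeq: "{0..<7::nat} - {1,5,6} = {0,2,3,4}" by auto
  show False using rk2_three[OF rk, of 1 5 6] unfolding Yeq by (simp add: cycle_E_def)
qed

lemma nrk_21: "\<not> rk2 (cycle_E 7) {2,5,6} ({0..<7} - {2,5,6})"
proof
  assume rk: "rk2 (cycle_E 7) {2,5,6} ({0..<7} - {2,5,6})"
  have Yeq: "{0..<7::nat} - {2,5,6} = {0,1,3,4}" by auto
  show False using rk2_three[OF rk, of 2 5 6] unfolding Yeq by (simp add: cycle_E_def)
qed

lemma nrk_22: "\<not> rk2 (cycle_E 7) {1,2,5,6} ({0..<7} - {1,2,5,6})"
proof
  assume rk: "rk2 (cycle_E 7) {1,2,5,6} ({0..<7} - {1,2,5,6})"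
  have Yeq: "{0..<7::nat} - {1,2,5,6} = {0,3,4}" by auto
  show False using rk2_three[OF rk, of 1 2 5] unfolding Yeq by (simp add: cycle_E_def)
qed

lemma nrk_23: "\<not> rk2 (cycle_E 7) {3,5,6} ({0..<7} - {3,5,6})"
proof
  assume rk: "rk2 (cycle_E 7) {3,5,6} ({0..<7} - {3,5,6})"
  have Yeq: "{0..<7::nat} - {3,5,6} = {0,1,2,4}" by auto
  show False using rk2_three[OF rk, of 3 5 6] unfolding Yeq by (simp add: cycle_E_def)
qed

lemma nrk_24: "\<not> rk2 (cycle_E 7) {1,3,5,6} ({0..<7} - {1,3,5,6})"
proof
  assume rk: "rk2 (cycle_E 7) {1,3,5,6} ({0..<7} - {1,3,5,6})"
  have Yeq: "{0..<7::nat} - {1,3,5,6} = {0,2,4}" by auto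
  show False using rk2_three[OF rk, of 1 3 5] unfolding Yeq by (simp add: cycle_E_def)
qed

lemma nrk_25: "\<not> rk2 (cycle_E 7) {2,3,5,6} ({0..<7} - {2,3,5,6})"
proof
  assume rk: "rk2 (cycle_E 7) {2,3,5,6} ({0..<7} - {2,3,5,6})"
  have Yeq: "{0..<7::nat} - {2,3,5,6} = {0,1,4}" by auto
  show False using rk2_three[OF rk, of 2 3 6] unfolding Yeq by (simp add: cycle_E_def)
qed

lemma nrk_26: "\<not> rk2 (cycle_E 7) {1,4,5,6} ({0..<7} - {1,4,5,6})"
proof
  assume rk: "rk2 (cycle_E 7) {1,4,5,6} ({0..<7} - {1,4,5,6})"
  have Yeq: "{0..<7::nat} - {1,4,5,6} = {0,2,3}" by auto
  show False using rk2_three[OF rk, of 1 4 6] unfolding Yeq by (simp add: cycle_E_def)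
qed

lemma nrk_27: "\<not> rk2 (cycle_E 7) {2,4,5,6} ({0..<7} - {2,4,5,6})"
proof
  assume rk: "rk2 (cycle_E 7) {2,4,5,6} ({0..<7} - {2,4,5,6})"
  have Yeq: "{0..<7::nat} - {2,4,5,6} = {0,1,3}" by auto
  show False using rk2_three[OF rk, of 2 4 6] unfolding Yeq by (simp add: cycle_E_def)
qed

lemma comb7:
  fixes R :: "nat \<Rightarrow> nat \<Rightarrow> bool"
  assumes Rsym: "\<And>a b. R a b = R b a"
    and match: "\<And>a b c. a < 7 \<Longrightarrow> b < 7 \<Longrightarrow> c < 7 \<Longrightarrow> a \<noteq> b \<Longrightarrow> a \<noteq> c \<Longrightarrow> b \<noteq> c \<Longrightarrow> R a b \<Longrightarrow> R a c \<Longrightarrow> False"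
    and resp: "\<And>X. X \<subseteq> {0..<7} \<Longrightarrow> \<forall>a<7. \<forall>b<7. R a b \<longrightarrow> (a \<in> X \<longleftrightarrow> b \<in> X) \<Longrightarrow> rk2 (cycle_E 7) X ({0..<7} - X)"
  shows False
proof -
  have s10: "R 1 0 = R 0 1" by (rule Rsym)
  have s20: "R 2 0 = R 0 2" by (rule Rsym)
  have s21: "R 2 1 = R 1 2" by (rule Rsym)
  have s30: "R 3 0 = R 0 3" by (rule Rsym)
  have s31: "R 3 1 = R 1 3" by (rule Rsym)
  have s32: "R 3 2 = R 2 3" by (rule Rsym)
  have s40: "R 4 0 = R 0 4" by (rule Rsym)
  have s41: "R 4 1 = R 1 4" by (rule Rsym)
  have s42: "R 4 2 = R 2 4" by (rule Rsym)
  have s43: "R 4 3 = R 3 4" by (rule Rsym)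
  have s50: "R 5 0 = R 0 5" by (rule Rsym)
  have s51: "R 5 1 = R 1 5" by (rule Rsym)
  have s52: "R 5 2 = R 2 5" by (rule Rsym)
  have s53: "R 5 3 = R 3 5" by (rule Rsym)
  have s54: "R 5 4 = R 4 5" by (rule Rsym)
  have s60: "R 6 0 = R 0 6" by (rule Rsym)
  have s61: "R 6 1 = R 1 6" by (rule Rsym)
  have s62: "R 6 2 = R 2 6" by (rule Rsym)
  have s63: "R 6 3 = R 3 6" by (rule Rsym)
  have s64: "R 6 4 = R 4 6" by (rule Rsym)
  have s65: "R 6 5 = R 5 6" by (rule Rsym)
  have c0: "R 0 1 \<or> R 1 3 \<or> R 1 5 \<or> R 1 6 \<or> R 0 2 \<or> R 2 3 \<or> R 2 5 \<or> R 2 6 \<or> R 0 4 \<or> R 3 4 \<or> R 4 5 \<or> R 4 6"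
  proof (rule ccontr)
    assume nd: "\<not> (R 0 1 \<or> R 1 3 \<or> R 1 5 \<or> R 1 6 \<or> R 0 2 \<or> R 2 3 \<or> R 2 5 \<or> R 2 6 \<or> R 0 4 \<or> R 3 4 \<or> R 4 5 \<or> R 4 6)"
    have "\<forall>a<7. \<forall>b<7. R a b \<longrightarrow> (a \<in> {1,2,4} \<longleftrightarrow> b \<in> {1,2,4})"
      unfolding all7 using nd s10 s20 s21 s30 s31 s32 s40 s41 s42 s43 s50 s51 s52 s53 s54 s60 s61 s62 s63 s64 s65 by simp
    then have "rk2 (cycle_E 7) {1,2,4} ({0..<7} - {1,2,4})" using resp[of "{1,2,4}"] by simp
    then show False using nrk_0 by simp
  qed
  have c1: "R 0 1 \<or> R 1 2 \<or> R 1 5 \<or> R 1 6 \<or> R 0 3 \<or> R 2 3 \<or> R 3 5 \<or> R 3 6 \<or> R 0 4 \<or> R 2 4 \<or> R 4 5 \<or> R 4 6"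
  proof (rule ccontr)
    assume nd: "\<not> (R 0 1 \<or> R 1 2 \<or> R 1 5 \<or> R 1 6 \<or> R 0 3 \<or> R 2 3 \<or> R 3 5 \<or> R 3 6 \<or> R 0 4 \<or> R 2 4 \<or> R 4 5 \<or> R 4 6)"
    have "\<forall>a<7. \<forall>b<7. R a b \<longrightarrow> (a \<in> {1,3,4} \<longleftrightarrow> b \<in> {1,3,4})"
      unfolding all7 using nd s10 s20 s21 s30 s31 s32 s40 s41 s42 s43 s50 s51 s52 s53 s54 s60 s61 s62 s63 s64 s65 by simp
    then have "rk2 (cycle_E 7) {1,3,4} ({0..<7} - {1,3,4})" using resp[of "{1,3,4}"] by simp
    then show False using nrk_1 by simp
  qed
  have c2: "R 0 1 \<or> R 1 3 \<or> R 1 4 \<or> R 1 6 \<or> R 0 2 \<or> R 2 3 \<or> R 2 4 \<or> R 2 6 \<or> R 0 5 \<or> R 3 5 \<or> R 4 5 \<or> R 5 6"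
  proof (rule ccontr)
    assume nd: "\<not> (R 0 1 \<or> R 1 3 \<or> R 1 4 \<or> R 1 6 \<or> R 0 2 \<or> R 2 3 \<or> R 2 4 \<or> R 2 6 \<or> R 0 5 \<or> R 3 5 \<or> R 4 5 \<or> R 5 6)"
    have "\<forall>a<7. \<forall>b<7. R a b \<longrightarrow> (a \<in> {1,2,5} \<longleftrightarrow> b \<in> {1,2,5})"
      unfolding all7 using nd s10 s20 s21 s30 s31 s32 s40 s41 s42 s43 s50 s51 s52 s53 s54 s60 s61 s62 s63 s64 s65 by simp
    then have "rk2 (cycle_E 7) {1,2,5} ({0..<7} - {1,2,5})" using resp[of "{1,2,5}"] by simp
    then show False using nrk_2 by simp
  qed
  have c3: "R 0 1 \<or> R 1 2 \<or> R 1 4 \<or> R 1 6 \<or> R 0 3 \<or> R 2 3 \<or> R 3 4 \<or> R 3 6 \<or> R 0 5 \<or> R 2 5 \<or> R 4 5 \<or> R 5 6"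
  proof (rule ccontr)
    assume nd: "\<not> (R 0 1 \<or> R 1 2 \<or> R 1 4 \<or> R 1 6 \<or> R 0 3 \<or> R 2 3 \<or> R 3 4 \<or> R 3 6 \<or> R 0 5 \<or> R 2 5 \<or> R 4 5 \<or> R 5 6)"
    have "\<forall>a<7. \<forall>b<7. R a b \<longrightarrow> (a \<in> {1,3,5} \<longleftrightarrow> b \<in> {1,3,5})"
      unfolding all7 using nd s10 s20 s21 s30 s31 s32 s40 s41 s42 s43 s50 s51 s52 s53 s54 s60 s61 s62 s63 s64 s65 by simp
    then have "rk2 (cycle_E 7) {1,3,5} ({0..<7} - {1,3,5})" using resp[of "{1,3,5}"] by simp
    then show False using nrk_3 by simp
  qed
  have c4: "R 0 2 \<or> R 1 2 \<or> R 2 4 \<or> R 2 6 \<or> R 0 3 \<or> R 1 3 \<or> R 3 4 \<or> R 3 6 \<or> R 0 5 \<or> R 1 5 \<or> R 4 5 \<or> R 5 6"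
  proof (rule ccontr)
    assume nd: "\<not> (R 0 2 \<or> R 1 2 \<or> R 2 4 \<or> R 2 6 \<or> R 0 3 \<or> R 1 3 \<or> R 3 4 \<or> R 3 6 \<or> R 0 5 \<or> R 1 5 \<or> R 4 5 \<or> R 5 6)"
    have "\<forall>a<7. \<forall>b<7. R a b \<longrightarrow> (a \<in> {2,3,5} \<longleftrightarrow> b \<in> {2,3,5})"
      unfolding all7 using nd s10 s20 s21 s30 s31 s32 s40 s41 s42 s43 s50 s51 s52 s53 s54 s60 s61 s62 s63 s64 s65 by simp
    then have "rk2 (cycle_E 7) {2,3,5} ({0..<7} - {2,3,5})" using resp[of "{2,3,5}"] by simp
    then show False using nrk_4 by simp
  qed
  have c5: "R 0 1 \<or> R 1 4 \<or> R 1 6 \<or> R 0 2 \<or> R 2 4 \<or> R 2 6 \<or> R 0 3 \<or> R 3 4 \<or> R 3 6 \<or> R 0 5 \<or> R 4 5 \<or> R 5 6"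
  proof (rule ccontr)
    assume nd: "\<not> (R 0 1 \<or> R 1 4 \<or> R 1 6 \<or> R 0 2 \<or> R 2 4 \<or> R 2 6 \<or> R 0 3 \<or> R 3 4 \<or> R 3 6 \<or> R 0 5 \<or> R 4 5 \<or> R 5 6)"
    have "\<forall>a<7. \<forall>b<7. R a b \<longrightarrow> (a \<in> {1,2,3,5} \<longleftrightarrow> b \<in> {1,2,3,5})"
      unfolding all7 using nd s10 s20 s21 s30 s31 s32 s40 s41 s42 s43 s50 s51 s52 s53 s54 s60 s61 s62 s63 s64 s65 by simp
    then have "rk2 (cycle_E 7) {1,2,3,5} ({0..<7} - {1,2,3,5})" using resp[of "{1,2,3,5}"] by simp
    then show False using nrk_5 by simp
  qed
  have c6: "R 0 1 \<or> R 1 2 \<or> R 1 3 \<or> R 1 6 \<or> R 0 4 \<or> R 2 4 \<or> R 3 4 \<or> R 4 6 \<or> R 0 5 \<or> R 2 5 \<or> R 3 5 \<or> R 5 6"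
  proof (rule ccontr)
    assume nd: "\<not> (R 0 1 \<or> R 1 2 \<or> R 1 3 \<or> R 1 6 \<or> R 0 4 \<or> R 2 4 \<or> R 3 4 \<or> R 4 6 \<or> R 0 5 \<or> R 2 5 \<or> R 3 5 \<or> R 5 6)"
    have "\<forall>a<7. \<forall>b<7. R a b \<longrightarrow> (a \<in> {1,4,5} \<longleftrightarrow> b \<in> {1,4,5})"
      unfolding all7 using nd s10 s20 s21 s30 s31 s32 s40 s41 s42 s43 s50 s51 s52 s53 s54 s60 s61 s62 s63 s64 s65 by simp
    then have "rk2 (cycle_E 7) {1,4,5} ({0..<7} - {1,4,5})" using resp[of "{1,4,5}"] by simp
    then show False using nrk_6 by simp
  qed
  have c7: "R 0 2 \<or> R 1 2 \<or> R 2 3 \<or> R 2 6 \<or> R 0 4 \<or> R 1 4 \<or> R 3 4 \<or> R 4 6 \<or> R 0 5 \<or> R 1 5 \<or> R 3 5 \<or> R 5 6"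
  proof (rule ccontr)
    assume nd: "\<not> (R 0 2 \<or> R 1 2 \<or> R 2 3 \<or> R 2 6 \<or> R 0 4 \<or> R 1 4 \<or> R 3 4 \<or> R 4 6 \<or> R 0 5 \<or> R 1 5 \<or> R 3 5 \<or> R 5 6)"
    have "\<forall>a<7. \<forall>b<7. R a b \<longrightarrow> (a \<in> {2,4,5} \<longleftrightarrow> b \<in> {2,4,5})"
      unfolding all7 using nd s10 s20 s21 s30 s31 s32 s40 s41 s42 s43 s50 s51 s52 s53 s54 s60 s61 s62 s63 s64 s65 by simp
    then have "rk2 (cycle_E 7) {2,4,5} ({0..<7} - {2,4,5})" using resp[of "{2,4,5}"] by simp
    then show False using nrk_7 by simp
  qed
  have c8: "R 0 1 \<or> R 1 3 \<or> R 1 6 \<or> R 0 2 \<or> R 2 3 \<or> R 2 6 \<or> R 0 4 \<or> R 3 4 \<or> R 4 6 \<or> R 0 5 \<or> R 3 5 \<or> R 5 6"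
  proof (rule ccontr)
    assume nd: "\<not> (R 0 1 \<or> R 1 3 \<or> R 1 6 \<or> R 0 2 \<or> R 2 3 \<or> R 2 6 \<or> R 0 4 \<or> R 3 4 \<or> R 4 6 \<or> R 0 5 \<or> R 3 5 \<or> R 5 6)"
    have "\<forall>a<7. \<forall>b<7. R a b \<longrightarrow> (a \<in> {1,2,4,5} \<longleftrightarrow> b \<in> {1,2,4,5})"
      unfolding all7 using nd s10 s20 s21 s30 s31 s32 s40 s41 s42 s43 s50 s51 s52 s53 s54 s60 s61 s62 s63 s64 s65 by simp
    then have "rk2 (cycle_E 7) {1,2,4,5} ({0..<7} - {1,2,4,5})" using resp[of "{1,2,4,5}"] by simp
    then show False using nrk_8 by simp
  qed
  have c9: "R 0 1 \<or> R 1 2 \<or> R 1 6 \<or> R 0 3 \<or> R 2 3 \<or> R 3 6 \<or> R 0 4 \<or> R 2 4 \<or> R 4 6 \<or> R 0 5 \<or> R 2 5 \<or> R 5 6"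
  proof (rule ccontr)
    assume nd: "\<not> (R 0 1 \<or> R 1 2 \<or> R 1 6 \<or> R 0 3 \<or> R 2 3 \<or> R 3 6 \<or> R 0 4 \<or> R 2 4 \<or> R 4 6 \<or> R 0 5 \<or> R 2 5 \<or> R 5 6)"
    have "\<forall>a<7. \<forall>b<7. R a b \<longrightarrow> (a \<in> {1,3,4,5} \<longleftrightarrow> b \<in> {1,3,4,5})"
      unfolding all7 using nd s10 s20 s21 s30 s31 s32 s40 s41 s42 s43 s50 s51 s52 s53 s54 s60 s61 s62 s63 s64 s65 by simp
    then have "rk2 (cycle_E 7) {1,3,4,5} ({0..<7} - {1,3,4,5})" using resp[of "{1,3,4,5}"] by simp
    then show False using nrk_9 by simp
  qed
  have c10: "R 0 1 \<or> R 1 3 \<or> R 1 4 \<or> R 1 5 \<or> R 0 2 \<or> R 2 3 \<or> R 2 4 \<or> R 2 5 \<or> R 0 6 \<or> R 3 6 \<or> R 4 6 \<or> R 5 6"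
  proof (rule ccontr)
    assume nd: "\<not> (R 0 1 \<or> R 1 3 \<or> R 1 4 \<or> R 1 5 \<or> R 0 2 \<or> R 2 3 \<or> R 2 4 \<or> R 2 5 \<or> R 0 6 \<or> R 3 6 \<or> R 4 6 \<or> R 5 6)"
    have "\<forall>a<7. \<forall>b<7. R a b \<longrightarrow> (a \<in> {1,2,6} \<longleftrightarrow> b \<in> {1,2,6})"
      unfolding all7 using nd s10 s20 s21 s30 s31 s32 s40 s41 s42 s43 s50 s51 s52 s53 s54 s60 s61 s62 s63 s64 s65 by simp
    then have "rk2 (cycle_E 7) {1,2,6} ({0..<7} - {1,2,6})" using resp[of "{1,2,6}"] by simp
    then show False using nrk_10 by simp
  qed
  have c11: "R 0 1 \<or> R 1 2 \<or> R 1 4 \<or> R 1 5 \<or> R 0 3 \<or> R 2 3 \<or> R 3 4 \<or> R 3 5 \<or> R 0 6 \<or> R 2 6 \<or> R 4 6 \<or> R 5 6"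
  proof (rule ccontr)
    assume nd: "\<not> (R 0 1 \<or> R 1 2 \<or> R 1 4 \<or> R 1 5 \<or> R 0 3 \<or> R 2 3 \<or> R 3 4 \<or> R 3 5 \<or> R 0 6 \<or> R 2 6 \<or> R 4 6 \<or> R 5 6)"
    have "\<forall>a<7. \<forall>b<7. R a b \<longrightarrow> (a \<in> {1,3,6} \<longleftrightarrow> b \<in> {1,3,6})"
      unfolding all7 using nd s10 s20 s21 s30 s31 s32 s40 s41 s42 s43 s50 s51 s52 s53 s54 s60 s61 s62 s63 s64 s65 by simp
    then have "rk2 (cycle_E 7) {1,3,6} ({0..<7} - {1,3,6})" using resp[of "{1,3,6}"] by simp
    then show False using nrk_11 by simp
  qed
  have c12: "R 0 2 \<or> R 1 2 \<or> R 2 4 \<or> R 2 5 \<or> R 0 3 \<or> R 1 3 \<or> R 3 4 \<or> R 3 5 \<or> R 0 6 \<or> R 1 6 \<or> R 4 6 \<or> R 5 6"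
  proof (rule ccontr)
    assume nd: "\<not> (R 0 2 \<or> R 1 2 \<or> R 2 4 \<or> R 2 5 \<or> R 0 3 \<or> R 1 3 \<or> R 3 4 \<or> R 3 5 \<or> R 0 6 \<or> R 1 6 \<or> R 4 6 \<or> R 5 6)"
    have "\<forall>a<7. \<forall>b<7. R a b \<longrightarrow> (a \<in> {2,3,6} \<longleftrightarrow> b \<in> {2,3,6})"
      unfolding all7 using nd s10 s20 s21 s30 s31 s32 s40 s41 s42 s43 s50 s51 s52 s53 s54 s60 s61 s62 s63 s64 s65 by simp
    then have "rk2 (cycle_E 7) {2,3,6} ({0..<7} - {2,3,6})" using resp[of "{2,3,6}"] by simp
    then show False using nrk_12 by simp
  qed
  have c13: "R 0 1 \<or> R 1 4 \<or> R 1 5 \<or> R 0 2 \<or> R 2 4 \<or> R 2 5 \<or> R 0 3 \<or> R 3 4 \<or> R 3 5 \<or> R 0 6 \<or> R 4 6 \<or> R 5 6"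
  proof (rule ccontr)
    assume nd: "\<not> (R 0 1 \<or> R 1 4 \<or> R 1 5 \<or> R 0 2 \<or> R 2 4 \<or> R 2 5 \<or> R 0 3 \<or> R 3 4 \<or> R 3 5 \<or> R 0 6 \<or> R 4 6 \<or> R 5 6)"
    have "\<forall>a<7. \<forall>b<7. R a b \<longrightarrow> (a \<in> {1,2,3,6} \<longleftrightarrow> b \<in> {1,2,3,6})"
      unfolding all7 using nd s10 s20 s21 s30 s31 s32 s40 s41 s42 s43 s50 s51 s52 s53 s54 s60 s61 s62 s63 s64 s65 by simp
    then have "rk2 (cycle_E 7) {1,2,3,6} ({0..<7} - {1,2,3,6})" using resp[of "{1,2,3,6}"] by simp
    then show False using nrk_13 by simp
  qed
  have c14: "R 0 1 \<or> R 1 2 \<or> R 1 3 \<or> R 1 5 \<or> R 0 4 \<or> R 2 4 \<or> R 3 4 \<or> R 4 5 \<or> R 0 6 \<or> R 2 6 \<or> R 3 6 \<or> R 5 6"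
  proof (rule ccontr)
    assume nd: "\<not> (R 0 1 \<or> R 1 2 \<or> R 1 3 \<or> R 1 5 \<or> R 0 4 \<or> R 2 4 \<or> R 3 4 \<or> R 4 5 \<or> R 0 6 \<or> R 2 6 \<or> R 3 6 \<or> R 5 6)"
    have "\<forall>a<7. \<forall>b<7. R a b \<longrightarrow> (a \<in> {1,4,6} \<longleftrightarrow> b \<in> {1,4,6})"
      unfolding all7 using nd s10 s20 s21 s30 s31 s32 s40 s41 s42 s43 s50 s51 s52 s53 s54 s60 s61 s62 s63 s64 s65 by simp
    then have "rk2 (cycle_E 7) {1,4,6} ({0..<7} - {1,4,6})" using resp[of "{1,4,6}"] by simp
    then show False using nrk_14 by simp
  qed
  have c15: "R 0 2 \<or> R 1 2 \<or> R 2 3 \<or> R 2 5 \<or> R 0 4 \<or> R 1 4 \<or> R 3 4 \<or> R 4 5 \<or> R 0 6 \<or> R 1 6 \<or> R 3 6 \<or> R 5 6"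
  proof (rule ccontr)
    assume nd: "\<not> (R 0 2 \<or> R 1 2 \<or> R 2 3 \<or> R 2 5 \<or> R 0 4 \<or> R 1 4 \<or> R 3 4 \<or> R 4 5 \<or> R 0 6 \<or> R 1 6 \<or> R 3 6 \<or> R 5 6)"
    have "\<forall>a<7. \<forall>b<7. R a b \<longrightarrow> (a \<in> {2,4,6} \<longleftrightarrow> b \<in> {2,4,6})"
      unfolding all7 using nd s10 s20 s21 s30 s31 s32 s40 s41 s42 s43 s50 s51 s52 s53 s54 s60 s61 s62 s63 s64 s65 by simp
    then have "rk2 (cycle_E 7) {2,4,6} ({0..<7} - {2,4,6})" using resp[of "{2,4,6}"] by simp
    then show False using nrk_15 by simp
  qed
  have c16: "R 0 1 \<or> R 1 3 \<or> R 1 5 \<or> R 0 2 \<or> R 2 3 \<or> R 2 5 \<or> R 0 4 \<or> R 3 4 \<or> R 4 5 \<or> R 0 6 \<or> R 3 6 \<or> R 5 6"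
  proof (rule ccontr)
    assume nd: "\<not> (R 0 1 \<or> R 1 3 \<or> R 1 5 \<or> R 0 2 \<or> R 2 3 \<or> R 2 5 \<or> R 0 4 \<or> R 3 4 \<or> R 4 5 \<or> R 0 6 \<or> R 3 6 \<or> R 5 6)"
    have "\<forall>a<7. \<forall>b<7. R a b \<longrightarrow> (a \<in> {1,2,4,6} \<longleftrightarrow> b \<in> {1,2,4,6})"
      unfolding all7 using nd s10 s20 s21 s30 s31 s32 s40 s41 s42 s43 s50 s51 s52 s53 s54 s60 s61 s62 s63 s64 s65 by simp
    then have "rk2 (cycle_E 7) {1,2,4,6} ({0..<7} - {1,2,4,6})" using resp[of "{1,2,4,6}"] by simp
    then show False using nrk_16 by simp
  qed
  have c17: "R 0 3 \<or> R 1 3 \<or> R 2 3 \<or> R 3 5 \<or> R 0 4 \<or> R 1 4 \<or> R 2 4 \<or> R 4 5 \<or> R 0 6 \<or> R 1 6 \<or> R 2 6 \<or> R 5 6"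
  proof (rule ccontr)
    assume nd: "\<not> (R 0 3 \<or> R 1 3 \<or> R 2 3 \<or> R 3 5 \<or> R 0 4 \<or> R 1 4 \<or> R 2 4 \<or> R 4 5 \<or> R 0 6 \<or> R 1 6 \<or> R 2 6 \<or> R 5 6)"
    have "\<forall>a<7. \<forall>b<7. R a b \<longrightarrow> (a \<in> {3,4,6} \<longleftrightarrow> b \<in> {3,4,6})"
      unfolding all7 using nd s10 s20 s21 s30 s31 s32 s40 s41 s42 s43 s50 s51 s52 s53 s54 s60 s61 s62 s63 s64 s65 by simp
    then have "rk2 (cycle_E 7) {3,4,6} ({0..<7} - {3,4,6})" using resp[of "{3,4,6}"] by simp
    then show False using nrk_17 by simp
  qed
  have c18: "R 0 1 \<or> R 1 2 \<or> R 1 5 \<or> R 0 3 \<or> R 2 3 \<or> R 3 5 \<or> R 0 4 \<or> R 2 4 \<or> R 4 5 \<or> R 0 6 \<or> R 2 6 \<or> R 5 6"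
  proof (rule ccontr)
    assume nd: "\<not> (R 0 1 \<or> R 1 2 \<or> R 1 5 \<or> R 0 3 \<or> R 2 3 \<or> R 3 5 \<or> R 0 4 \<or> R 2 4 \<or> R 4 5 \<or> R 0 6 \<or> R 2 6 \<or> R 5 6)"
    have "\<forall>a<7. \<forall>b<7. R a b \<longrightarrow> (a \<in> {1,3,4,6} \<longleftrightarrow> b \<in> {1,3,4,6})"
      unfolding all7 using nd s10 s20 s21 s30 s31 s32 s40 s41 s42 s43 s50 s51 s52 s53 s54 s60 s61 s62 s63 s64 s65 by simp
    then have "rk2 (cycle_E 7) {1,3,4,6} ({0..<7} - {1,3,4,6})" using resp[of "{1,3,4,6}"] by simp
    then show False using nrk_18 by simp
  qed
  have c19: "R 0 2 \<or> R 1 2 \<or> R 2 5 \<or> R 0 3 \<or> R 1 3 \<or> R 3 5 \<or> R 0 4 \<or> R 1 4 \<or> R 4 5 \<or> R 0 6 \<or> R 1 6 \<or> R 5 6"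
  proof (rule ccontr)
    assume nd: "\<not> (R 0 2 \<or> R 1 2 \<or> R 2 5 \<or> R 0 3 \<or> R 1 3 \<or> R 3 5 \<or> R 0 4 \<or> R 1 4 \<or> R 4 5 \<or> R 0 6 \<or> R 1 6 \<or> R 5 6)"
    have "\<forall>a<7. \<forall>b<7. R a b \<longrightarrow> (a \<in> {2,3,4,6} \<longleftrightarrow> b \<in> {2,3,4,6})"
      unfolding all7 using nd s10 s20 s21 s30 s31 s32 s40 s41 s42 s43 s50 s51 s52 s53 s54 s60 s61 s62 s63 s64 s65 by simp
    then have "rk2 (cycle_E 7) {2,3,4,6} ({0..<7} - {2,3,4,6})" using resp[of "{2,3,4,6}"] by simp
    then show False using nrk_19 by simp
  qed
  have c20: "R 0 1 \<or> R 1 2 \<or> R 1 3 \<or> R 1 4 \<or> R 0 5 \<or> R 2 5 \<or> R 3 5 \<or> R 4 5 \<or> R 0 6 \<or> R 2 6 \<or> R 3 6 \<or> R 4 6"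
  proof (rule ccontr)
    assume nd: "\<not> (R 0 1 \<or> R 1 2 \<or> R 1 3 \<or> R 1 4 \<or> R 0 5 \<or> R 2 5 \<or> R 3 5 \<or> R 4 5 \<or> R 0 6 \<or> R 2 6 \<or> R 3 6 \<or> R 4 6)"
    have "\<forall>a<7. \<forall>b<7. R a b \<longrightarrow> (a \<in> {1,5,6} \<longleftrightarrow> b \<in> {1,5,6})"
      unfolding all7 using nd s10 s20 s21 s30 s31 s32 s40 s41 s42 s43 s50 s51 s52 s53 s54 s60 s61 s62 s63 s64 s65 by simp
    then have "rk2 (cycle_E 7) {1,5,6} ({0..<7} - {1,5,6})" using resp[of "{1,5,6}"] by simp
    then show False using nrk_20 by simp
  qed
  have c21: "R 0 2 \<or> R 1 2 \<or> R 2 3 \<or> R 2 4 \<or> R 0 5 \<or> R 1 5 \<or> R 3 5 \<or> R 4 5 \<or> R 0 6 \<or> R 1 6 \<or> R 3 6 \<or> R 4 6"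
  proof (rule ccontr)
    assume nd: "\<not> (R 0 2 \<or> R 1 2 \<or> R 2 3 \<or> R 2 4 \<or> R 0 5 \<or> R 1 5 \<or> R 3 5 \<or> R 4 5 \<or> R 0 6 \<or> R 1 6 \<or> R 3 6 \<or> R 4 6)"
    have "\<forall>a<7. \<forall>b<7. R a b \<longrightarrow> (a \<in> {2,5,6} \<longleftrightarrow> b \<in> {2,5,6})"
      unfolding all7 using nd s10 s20 s21 s30 s31 s32 s40 s41 s42 s43 s50 s51 s52 s53 s54 s60 s61 s62 s63 s64 s65 by simp
    then have "rk2 (cycle_E 7) {2,5,6} ({0..<7} - {2,5,6})" using resp[of "{2,5,6}"] by simp
    then show False using nrk_21 by simp
  qed
  have c22: "R 0 1 \<or> R 1 3 \<or> R 1 4 \<or> R 0 2 \<or> R 2 3 \<or> R 2 4 \<or> R 0 5 \<or> R 3 5 \<or> R 4 5 \<or> R 0 6 \<or> R 3 6 \<or> R 4 6"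
  proof (rule ccontr)
    assume nd: "\<not> (R 0 1 \<or> R 1 3 \<or> R 1 4 \<or> R 0 2 \<or> R 2 3 \<or> R 2 4 \<or> R 0 5 \<or> R 3 5 \<or> R 4 5 \<or> R 0 6 \<or> R 3 6 \<or> R 4 6)"
    have "\<forall>a<7. \<forall>b<7. R a b \<longrightarrow> (a \<in> {1,2,5,6} \<longleftrightarrow> b \<in> {1,2,5,6})"
      unfolding all7 using nd s10 s20 s21 s30 s31 s32 s40 s41 s42 s43 s50 s51 s52 s53 s54 s60 s61 s62 s63 s64 s65 by simp
    then have "rk2 (cycle_E 7) {1,2,5,6} ({0..<7} - {1,2,5,6})" using resp[of "{1,2,5,6}"] by simp
    then show False using nrk_22 by simp
  qed
  have c23: "R 0 3 \<or> R 1 3 \<or> R 2 3 \<or> R 3 4 \<or> R 0 5 \<or> R 1 5 \<or> R 2 5 \<or> R 4 5 \<or> R 0 6 \<or> R 1 6 \<or> R 2 6 \<or> R 4 6"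
  proof (rule ccontr)
    assume nd: "\<not> (R 0 3 \<or> R 1 3 \<or> R 2 3 \<or> R 3 4 \<or> R 0 5 \<or> R 1 5 \<or> R 2 5 \<or> R 4 5 \<or> R 0 6 \<or> R 1 6 \<or> R 2 6 \<or> R 4 6)"
    have "\<forall>a<7. \<forall>b<7. R a b \<longrightarrow> (a \<in> {3,5,6} \<longleftrightarrow> b \<in> {3,5,6})"
      unfolding all7 using nd s10 s20 s21 s30 s31 s32 s40 s41 s42 s43 s50 s51 s52 s53 s54 s60 s61 s62 s63 s64 s65 by simp
    then have "rk2 (cycle_E 7) {3,5,6} ({0..<7} - {3,5,6})" using resp[of "{3,5,6}"] by simp
    then show False using nrk_23 by simp
  qed
  have c24: "R 0 1 \<or> R 1 2 \<or> R 1 4 \<or> R 0 3 \<or> R 2 3 \<or> R 3 4 \<or> R 0 5 \<or> R 2 5 \<or> R 4 5 \<or> R 0 6 \<or> R 2 6 \<or> R 4 6"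
  proof (rule ccontr)
    assume nd: "\<not> (R 0 1 \<or> R 1 2 \<or> R 1 4 \<or> R 0 3 \<or> R 2 3 \<or> R 3 4 \<or> R 0 5 \<or> R 2 5 \<or> R 4 5 \<or> R 0 6 \<or> R 2 6 \<or> R 4 6)"
    have "\<forall>a<7. \<forall>b<7. R a b \<longrightarrow> (a \<in> {1,3,5,6} \<longleftrightarrow> b \<in> {1,3,5,6})"
      unfolding all7 using nd s10 s20 s21 s30 s31 s32 s40 s41 s42 s43 s50 s51 s52 s53 s54 s60 s61 s62 s63 s64 s65 by simp
    then have "rk2 (cycle_E 7) {1,3,5,6} ({0..<7} - {1,3,5,6})" using resp[of "{1,3,5,6}"] by simp
    then show False using nrk_24 by simp
  qed
  have c25: "R 0 2 \<or> R 1 2 \<or> R 2 4 \<or> R 0 3 \<or> R 1 3 \<or> R 3 4 \<or> R 0 5 \<or> R 1 5 \<or> R 4 5 \<or> R 0 6 \<or> R 1 6 \<or> R 4 6"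
  proof (rule ccontr)
    assume nd: "\<not> (R 0 2 \<or> R 1 2 \<or> R 2 4 \<or> R 0 3 \<or> R 1 3 \<or> R 3 4 \<or> R 0 5 \<or> R 1 5 \<or> R 4 5 \<or> R 0 6 \<or> R 1 6 \<or> R 4 6)"
    have "\<forall>a<7. \<forall>b<7. R a b \<longrightarrow> (a \<in> {2,3,5,6} \<longleftrightarrow> b \<in> {2,3,5,6})"
      unfolding all7 using nd s10 s20 s21 s30 s31 s32 s40 s41 s42 s43 s50 s51 s52 s53 s54 s60 s61 s62 s63 s64 s65 by simp
    then have "rk2 (cycle_E 7) {2,3,5,6} ({0..<7} - {2,3,5,6})" using resp[of "{2,3,5,6}"] by simp
    then show False using nrk_25 by simp
  qed
  have c26: "R 0 1 \<or> R 1 2 \<or> R 1 3 \<or> R 0 4 \<or> R 2 4 \<or> R 3 4 \<or> R 0 5 \<or> R 2 5 \<or> R 3 5 \<or> R 0 6 \<or> R 2 6 \<or> R 3 6"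
  proof (rule ccontr)
    assume nd: "\<not> (R 0 1 \<or> R 1 2 \<or> R 1 3 \<or> R 0 4 \<or> R 2 4 \<or> R 3 4 \<or> R 0 5 \<or> R 2 5 \<or> R 3 5 \<or> R 0 6 \<or> R 2 6 \<or> R 3 6)"
    have "\<forall>a<7. \<forall>b<7. R a b \<longrightarrow> (a \<in> {1,4,5,6} \<longleftrightarrow> b \<in> {1,4,5,6})"
      unfolding all7 using nd s10 s20 s21 s30 s31 s32 s40 s41 s42 s43 s50 s51 s52 s53 s54 s60 s61 s62 s63 s64 s65 by simp
    then have "rk2 (cycle_E 7) {1,4,5,6} ({0..<7} - {1,4,5,6})" using resp[of "{1,4,5,6}"] by simp
    then show False using nrk_26 by simp
  qed
  have c27: "R 0 2 \<or> R 1 2 \<or> R 2 3 \<or> R 0 4 \<or> R 1 4 \<or> R 3 4 \<or> R 0 5 \<or> R 1 5 \<or> R 3 5 \<or> R 0 6 \<or> R 1 6 \<or> R 3 6"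
  proof (rule ccontr)
    assume nd: "\<not> (R 0 2 \<or> R 1 2 \<or> R 2 3 \<or> R 0 4 \<or> R 1 4 \<or> R 3 4 \<or> R 0 5 \<or> R 1 5 \<or> R 3 5 \<or> R 0 6 \<or> R 1 6 \<or> R 3 6)"
    have "\<forall>a<7. \<forall>b<7. R a b \<longrightarrow> (a \<in> {2,4,5,6} \<longleftrightarrow> b \<in> {2,4,5,6})"
      unfolding all7 using nd s10 s20 s21 s30 s31 s32 s40 s41 s42 s43 s50 s51 s52 s53 s54 s60 s61 s62 s63 s64 s65 by simp
    then have "rk2 (cycle_E 7) {2,4,5,6} ({0..<7} - {2,4,5,6})" using resp[of "{2,4,5,6}"] by simp
    then show False using nrk_27 by simp
  qed
  have m0: "\<not> (R 0 1 \<and> R 0 2)" by (rule notI, erule conjE, rule match[of 0 1 2]) simp_all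
  have m1: "\<not> (R 0 1 \<and> R 0 3)" by (rule notI, erule conjE, rule match[of 0 1 3]) simp_all
  have m2: "\<not> (R 0 1 \<and> R 0 4)" by (rule notI, erule conjE, rule match[of 0 1 4]) simp_all
  have m3: "\<not> (R 0 1 \<and> R 0 5)" by (rule notI, erule conjE, rule match[of 0 1 5]) simp_all
  have m4: "\<not> (R 0 1 \<and> R 0 6)" by (rule notI, erule conjE, rule match[of 0 1 6]) simp_all
  have m5: "\<not> (R 0 2 \<and> R 0 3)" by (rule notI, erule conjE, rule match[of 0 2 3]) simp_all
  have m6: "\<not> (R 0 2 \<and> R 0 4)" by (rule notI, erule conjE, rule match[of 0 2 4]) simp_all
  have m7: "\<not> (R 0 2 \<and> R 0 5)" by (rule notI, erule conjE, rule match[of 0 2 5]) simp_all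
  have m8: "\<not> (R 0 2 \<and> R 0 6)" by (rule notI, erule conjE, rule match[of 0 2 6]) simp_all
  have m9: "\<not> (R 0 3 \<and> R 0 4)" by (rule notI, erule conjE, rule match[of 0 3 4]) simp_all
  have m10: "\<not> (R 0 3 \<and> R 0 5)" by (rule notI, erule conjE, rule match[of 0 3 5]) simp_all
  have m11: "\<not> (R 0 3 \<and> R 0 6)" by (rule notI, erule conjE, rule match[of 0 3 6]) simp_all
  have m12: "\<not> (R 0 4 \<and> R 0 5)" by (rule notI, erule conjE, rule match[of 0 4 5]) simp_all
  have m13: "\<not> (R 0 4 \<and> R 0 6)" by (rule notI, erule conjE, rule match[of 0 4 6]) simp_all
  have m14: "\<not> (R 0 5 \<and> R 0 6)" by (rule notI, erule conjE, rule match[of 0 5 6]) simp_all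
  have m15: "\<not> (R 0 1 \<and> R 1 2)" using match[of 1 0 2] s10 by auto
  have m16: "\<not> (R 0 1 \<and> R 1 3)" using match[of 1 0 3] s10 by auto
  have m17: "\<not> (R 0 1 \<and> R 1 4)" using match[of 1 0 4] s10 by auto
  have m18: "\<not> (R 0 1 \<and> R 1 5)" using match[of 1 0 5] s10 by auto
  have m19: "\<not> (R 0 1 \<and> R 1 6)" using match[of 1 0 6] s10 by auto
  have m20: "\<not> (R 1 2 \<and> R 1 3)" by (rule notI, erule conjE, rule match[of 1 2 3]) simp_all
  have m21: "\<not> (R 1 2 \<and> R 1 4)" by (rule notI, erule conjE, rule match[of 1 2 4]) simp_all
  have m22: "\<not> (R 1 2 \<and> R 1 5)" by (rule notI, erule conjE, rule match[of 1 2 5]) simp_all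
  have m23: "\<not> (R 1 2 \<and> R 1 6)" by (rule notI, erule conjE, rule match[of 1 2 6]) simp_all
  have m24: "\<not> (R 1 3 \<and> R 1 4)" by (rule notI, erule conjE, rule match[of 1 3 4]) simp_all
  have m25: "\<not> (R 1 3 \<and> R 1 5)" by (rule notI, erule conjE, rule match[of 1 3 5]) simp_all
  have m26: "\<not> (R 1 3 \<and> R 1 6)" by (rule notI, erule conjE, rule match[of 1 3 6]) simp_all
  have m27: "\<not> (R 1 4 \<and> R 1 5)" by (rule notI, erule conjE, rule match[of 1 4 5]) simp_all
  have m28: "\<not> (R 1 4 \<and> R 1 6)" by (rule notI, erule conjE, rule match[of 1 4 6]) simp_all
  have m29: "\<not> (R 1 5 \<and> R 1 6)" by (rule notI, erule conjE, rule match[of 1 5 6]) simp_all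
  have m30: "\<not> (R 0 2 \<and> R 1 2)" using match[of 2 0 1] s20 s21 by auto
  have m31: "\<not> (R 0 2 \<and> R 2 3)" using match[of 2 0 3] s20 by auto
  have m32: "\<not> (R 0 2 \<and> R 2 4)" using match[of 2 0 4] s20 by auto
  have m33: "\<not> (R 0 2 \<and> R 2 5)" using match[of 2 0 5] s20 by auto
  have m34: "\<not> (R 0 2 \<and> R 2 6)" using match[of 2 0 6] s20 by auto
  have m35: "\<not> (R 1 2 \<and> R 2 3)" using match[of 2 1 3] s21 by auto
  have m36: "\<not> (R 1 2 \<and> R 2 4)" using match[of 2 1 4] s21 by auto
  have m37: "\<not> (R 1 2 \<and> R 2 5)" using match[of 2 1 5] s21 by auto
  have m38: "\<not> (R 1 2 \<and> R 2 6)" using match[of 2 1 6] s21 by auto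
  have m39: "\<not> (R 2 3 \<and> R 2 4)" by (rule notI, erule conjE, rule match[of 2 3 4]) simp_all
  have m40: "\<not> (R 2 3 \<and> R 2 5)" by (rule notI, erule conjE, rule match[of 2 3 5]) simp_all
  have m41: "\<not> (R 2 3 \<and> R 2 6)" by (rule notI, erule conjE, rule match[of 2 3 6]) simp_all
  have m42: "\<not> (R 2 4 \<and> R 2 5)" by (rule notI, erule conjE, rule match[of 2 4 5]) simp_all
  have m43: "\<not> (R 2 4 \<and> R 2 6)" by (rule notI, erule conjE, rule match[of 2 4 6]) simp_all
  have m44: "\<not> (R 2 5 \<and> R 2 6)" by (rule notI, erule conjE, rule match[of 2 5 6]) simp_all
  have m45: "\<not> (R 0 3 \<and> R 1 3)" using match[of 3 0 1] s30 s31 by auto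
  have m46: "\<not> (R 0 3 \<and> R 2 3)" using match[of 3 0 2] s30 s32 by auto
  have m47: "\<not> (R 0 3 \<and> R 3 4)" using match[of 3 0 4] s30 by auto
  have m48: "\<not> (R 0 3 \<and> R 3 5)" using match[of 3 0 5] s30 by auto
  have m49: "\<not> (R 0 3 \<and> R 3 6)" using match[of 3 0 6] s30 by auto
  have m50: "\<not> (R 1 3 \<and> R 2 3)" using match[of 3 1 2] s31 s32 by auto
  have m51: "\<not> (R 1 3 \<and> R 3 4)" using match[of 3 1 4] s31 by auto
  have m52: "\<not> (R 1 3 \<and> R 3 5)" using match[of 3 1 5] s31 by auto
  have m53: "\<not> (R 1 3 \<and> R 3 6)" using match[of 3 1 6] s31 by auto
  have m54: "\<not> (R 2 3 \<and> R 3 4)" using match[of 3 2 4] s32 by auto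
  have m55: "\<not> (R 2 3 \<and> R 3 5)" using match[of 3 2 5] s32 by auto
  have m56: "\<not> (R 2 3 \<and> R 3 6)" using match[of 3 2 6] s32 by auto
  have m57: "\<not> (R 3 4 \<and> R 3 5)" by (rule notI, erule conjE, rule match[of 3 4 5]) simp_all
  have m58: "\<not> (R 3 4 \<and> R 3 6)" by (rule notI, erule conjE, rule match[of 3 4 6]) simp_all
  have m59: "\<not> (R 3 5 \<and> R 3 6)" by (rule notI, erule conjE, rule match[of 3 5 6]) simp_all
  have m60: "\<not> (R 0 4 \<and> R 1 4)" using match[of 4 0 1] s40 s41 by auto
  have m61: "\<not> (R 0 4 \<and> R 2 4)" using match[of 4 0 2] s40 s42 by auto
  have m62: "\<not> (R 0 4 \<and> R 3 4)" using match[of 4 0 3] s40 s43 by auto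
  have m63: "\<not> (R 0 4 \<and> R 4 5)" using match[of 4 0 5] s40 by auto
  have m64: "\<not> (R 0 4 \<and> R 4 6)" using match[of 4 0 6] s40 by auto
  have m65: "\<not> (R 1 4 \<and> R 2 4)" using match[of 4 1 2] s41 s42 by auto
  have m66: "\<not> (R 1 4 \<and> R 3 4)" using match[of 4 1 3] s41 s43 by auto
  have m67: "\<not> (R 1 4 \<and> R 4 5)" using match[of 4 1 5] s41 by auto
  have m68: "\<not> (R 1 4 \<and> R 4 6)" using match[of 4 1 6] s41 by auto
  have m69: "\<not> (R 2 4 \<and> R 3 4)" using match[of 4 2 3] s42 s43 by auto
  have m70: "\<not> (R 2 4 \<and> R 4 5)" using match[of 4 2 5] s42 by auto
  have m71: "\<not> (R 2 4 \<and> R 4 6)" using match[of 4 2 6] s42 by auto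
  have m72: "\<not> (R 3 4 \<and> R 4 5)" using match[of 4 3 5] s43 by auto
  have m73: "\<not> (R 3 4 \<and> R 4 6)" using match[of 4 3 6] s43 by auto
  have m74: "\<not> (R 4 5 \<and> R 4 6)" by (rule notI, erule conjE, rule match[of 4 5 6]) simp_all
  have m75: "\<not> (R 0 5 \<and> R 1 5)" using match[of 5 0 1] s50 s51 by auto
  have m76: "\<not> (R 0 5 \<and> R 2 5)" using match[of 5 0 2] s50 s52 by auto
  have m77: "\<not> (R 0 5 \<and> R 3 5)" using match[of 5 0 3] s50 s53 by auto
  have m78: "\<not> (R 0 5 \<and> R 4 5)" using match[of 5 0 4] s50 s54 by auto
  have m79: "\<not> (R 0 5 \<and> R 5 6)" using match[of 5 0 6] s50 by auto
  have m80: "\<not> (R 1 5 \<and> R 2 5)" using match[of 5 1 2] s51 s52 by auto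
  have m81: "\<not> (R 1 5 \<and> R 3 5)" using match[of 5 1 3] s51 s53 by auto
  have m82: "\<not> (R 1 5 \<and> R 4 5)" using match[of 5 1 4] s51 s54 by auto
  have m83: "\<not> (R 1 5 \<and> R 5 6)" using match[of 5 1 6] s51 by auto
  have m84: "\<not> (R 2 5 \<and> R 3 5)" using match[of 5 2 3] s52 s53 by auto
  have m85: "\<not> (R 2 5 \<and> R 4 5)" using match[of 5 2 4] s52 s54 by auto
  have m86: "\<not> (R 2 5 \<and> R 5 6)" using match[of 5 2 6] s52 by auto
  have m87: "\<not> (R 3 5 \<and> R 4 5)" using match[of 5 3 4] s53 s54 by auto
  have m88: "\<not> (R 3 5 \<and> R 5 6)" using match[of 5 3 6] s53 by auto
  have m89: "\<not> (R 4 5 \<and> R 5 6)" using match[of 5 4 6] s54 by auto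
  have m90: "\<not> (R 0 6 \<and> R 1 6)" using match[of 6 0 1] s60 s61 by auto
  have m91: "\<not> (R 0 6 \<and> R 2 6)" using match[of 6 0 2] s60 s62 by auto
  have m92: "\<not> (R 0 6 \<and> R 3 6)" using match[of 6 0 3] s60 s63 by auto
  have m93: "\<not> (R 0 6 \<and> R 4 6)" using match[of 6 0 4] s60 s64 by auto
  have m94: "\<not> (R 0 6 \<and> R 5 6)" using match[of 6 0 5] s60 s65 by auto
  have m95: "\<not> (R 1 6 \<and> R 2 6)" using match[of 6 1 2] s61 s62 by auto
  have m96: "\<not> (R 1 6 \<and> R 3 6)" using match[of 6 1 3] s61 s63 by auto
  have m97: "\<not> (R 1 6 \<and> R 4 6)" using match[of 6 1 4] s61 s64 by auto
  have m98: "\<not> (R 1 6 \<and> R 5 6)" using match[of 6 1 5] s61 s65 by auto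
  have m99: "\<not> (R 2 6 \<and> R 3 6)" using match[of 6 2 3] s62 s63 by auto
  have m100: "\<not> (R 2 6 \<and> R 4 6)" using match[of 6 2 4] s62 s64 by auto
  have m101: "\<not> (R 2 6 \<and> R 5 6)" using match[of 6 2 5] s62 s65 by auto
  have m102: "\<not> (R 3 6 \<and> R 4 6)" using match[of 6 3 4] s63 s64 by auto
  have m103: "\<not> (R 3 6 \<and> R 5 6)" using match[of 6 3 5] s63 s65 by auto
  have m104: "\<not> (R 4 6 \<and> R 5 6)" using match[of 6 4 5] s64 s65 by auto
  show False using c0 c1 c2 c3 c4 c5 c6 c7 c8 c9 c10 c11 c12 c13 c14 c15 c16 c17 c18 c19 c20 c21 c22 c23 c24 c25 c26 c27 m0 m1 m2 m3 m4 m5 m6 m7 m8 m9 m10 m11 m12 m13 m14 m15 m16 m17 m18 m19 m20 m21 m22 m23 m24 m25 m26 m27 m28 m29 m30 m31 m32 m33 m34 m35 m36 m37 m38 m39 m40 m41 m42 m43 m44 m45 m46 m47 m48 m49 m50 m51 m52 m53 m54 m55 m56 m57 m58 m59 m60 m61 m62 m63 m64 m65 m66 m67 m68 m69 m70 m71 m72 m73 m74 m75 m76 m77 m78 m79 m80 m81 m82 m83 m84 m85 m86 m87 m88 m89 m90 m91 m92 m93 m94 m95 m96 m97 m98 m99 m100 m101 m102 m103 m104 by sat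
qed


lemma rk2_twoK:
  "rk2 (twoK_E n) {v\<in>twoK_V n. fst v \<in> S} (twoK_V n - {v\<in>twoK_V n. fst v \<in> S})"
  unfolding rk2_def
proof (rule exI[of _ "\<lambda>y. \<not> snd y"], rule exI[of _ "\<lambda>y. snd y"], rule ballI)
  fix x assume x: "x \<in> {v\<in>twoK_V n. fst v \<in> S}"
  show "\<exists>a b. \<forall>y\<in>twoK_V n - {v\<in>twoK_V n. fst v \<in> S}. twoK_E n x y = ((a \<and> \<not> snd y) \<noteq> (b \<and> snd y))"
  proof (rule exI[of _ "\<not> snd x"], rule exI[of _ "snd x"], rule ballI)
    fix y assume y: "y \<in> twoK_V n - {v\<in>twoK_V n. fst v \<in> S}"
    have "fst x \<noteq> fst y" using x y by auto
    then show "twoK_E n x y = ((\<not> snd x \<and> \<not> snd y) \<noteq> (snd x \<and> snd y))"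
      using x y unfolding twoK_E_def by auto
  qed
qed

lemma inv3_twoK: "inv3 (twoK_E n) ({v\<in>twoK_V n. fst v \<in> S} \<union> (twoK_V n - {v\<in>twoK_V n. fst v \<in> S}))"
  unfolding inv3_def twoK_E_def by auto

lemma part2:
  shows "\<not> vertex_minor (cycle_V 7) (cycle_E 7) (twoK_V n) (twoK_E n)"
proof
  assume "vertex_minor (cycle_V 7) (cycle_E 7) (twoK_V n) (twoK_E n)"
  then obtain E' W f where E': "lc_reach (twoK_E n) E'" and W: "W \<subseteq> twoK_V n"
    and f: "bij_betw f {0..<7} W"
    and iso: "\<forall>x\<in>{0..<7}. \<forall>y\<in>{0..<7}. cycle_E 7 x y \<longleftrightarrow> induced E' W (f x) (f y)"
    unfolding vertex_minor_def graph_iso_def cycle_V_def by blast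
  define R where "R = (\<lambda>a b. fst (f a) = fst (f b))"
  have fW: "\<And>a. a < 7 \<Longrightarrow> f a \<in> W" using f unfolding bij_betw_def by auto
  have finj: "\<And>a b. a < 7 \<Longrightarrow> b < 7 \<Longrightarrow> f a = f b \<Longrightarrow> a = b"
    using f unfolding bij_betw_def inj_on_def by auto
  show False
  proof (rule comb7[of R])
    show "\<And>a b. R a b = R b a" unfolding R_def by auto
  next
    fix a b c :: nat
    assume abc: "a < 7" "b < 7" "c < 7" "a \<noteq> b" "a \<noteq> c" "b \<noteq> c" "R a b" "R a c"
    have ne: "f a \<noteq> f b" "f a \<noteq> f c" "f b \<noteq> f c"
      using finj[of a b] finj[of a c] finj[of b c] abc(1-6) by blast+
    have "snd (f a) \<noteq> snd (f b)" using ne(1) abc(7) unfolding R_def by (auto simp: prod_eq_iff)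
    moreover have "snd (f a) \<noteq> snd (f c)" using ne(2) abc(8) unfolding R_def by (auto simp: prod_eq_iff)
    moreover have "snd (f b) \<noteq> snd (f c)" using ne(3) abc(7,8) unfolding R_def by (auto simp: prod_eq_iff)
    ultimately show False by (cases "snd (f a)"; cases "snd (f b)"; cases "snd (f c)") auto
  next
    fix X :: "nat set"
    assume X: "X \<subseteq> {0..<7}" and resp: "\<forall>a<7. \<forall>b<7. R a b \<longrightarrow> (a \<in> X \<longleftrightarrow> b \<in> X)"
    define S where "S = fst ` f ` X"
    define X' where "X' = {v\<in>twoK_V n. fst v \<in> S}"
    have rk: "rk2 E' X' (twoK_V n - X')"
      unfolding X'_def using lc_reach_rk2[OF E' inv3_twoK _ rk2_twoK] by auto
    show "rk2 (cycle_E 7) X ({0..<7} - X)"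
    proof (rule rk2_transfer[OF rk, of f])
      show "f ` X \<subseteq> X'"
      proof
        fix v assume "v \<in> f ` X"
        then obtain a where a: "a \<in> X" "v = f a" by auto
        have "a < 7" using a X by auto
        then have "v \<in> twoK_V n" using a fW W by auto
        moreover have "fst v \<in> S" unfolding S_def using a by auto
        ultimately show "v \<in> X'" unfolding X'_def by auto
      qed
      show "f ` ({0..<7} - X) \<subseteq> twoK_V n - X'"
      proof
        fix v assume "v \<in> f ` ({0..<7} - X)"
        then obtain b where b: "b < 7" "b \<notin> X" "v = f b" by auto
        have "fst (f b) \<notin> S"
        proof
          assume "fst (f b) \<in> S"
          then obtain a where a: "a \<in> X" "fst (f a) = fst (f b)" unfolding S_def by auto
          then have "a < 7" using X by auto
          have "R a b" unfolding R_def using a by simp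
          then have "a \<in> X \<longleftrightarrow> b \<in> X" using resp \<open>a < 7\<close> b(1) by blast
          then show False using a b by blast
        qed
        moreover have "v \<in> twoK_V n" using b fW W by blast
        ultimately show "v \<in> twoK_V n - X'" unfolding X'_def using b by simp
      qed
      show "\<forall>a\<in>X. \<forall>b\<in>{0..<7} - X. cycle_E 7 a b = E' (f a) (f b)"
        using iso X fW unfolding induced_def by auto
    qed
  qed
qed

theorem proposition8p1:
  fixes n :: nat
  assumes "0 < n"
  shows "\<not> vertex_minor (twoK_V 3) (twoK_E 3) (cycle_V n) (cycle_E n)
       \<and> \<not> vertex_minor (cycle_V 7) (cycle_E 7) (twoK_V n) (twoK_E n)"
  using part1[OF assms] part2 by blast


end
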